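(* Let $v$ be a prime and let $\mathcal C$ be an a-proper $(v,w,w-1,\lambda_c)$-OOC. Then $\mathcal C$ contains a sequence whose set of positions of $1$s, $Q\subseteq\mathbb Z_v$, satisfies $\{rq+s:q\in Q\}=\{0,1,\dots,w-1\}$ for some $r\in\mathbb Z_v^*$ and $s\in\mathbb Z_v$; hence $\mathcal C$ is equivalent to an OOC containing a sequence with $w$ consecutive $1$s, where equivalence means: the sequences of one are obtained from those of the other by applying a common map $(x_t)\mapsto(x_{r't})$ with $r'\in\mathbb Z_v^*$ followed by a cyclic shift of each sequence individually.
   Context: $\mathbb Z_v^*=\{r\in\mathbb Z_v:\gcd(r,v)=1\}$. A $(v,w,\lambda_a,\lambda_c)$-OOC is a family $\mathcal C$ of binary sequences $X=(x_t)_{t=0}^{v-1}$ (indices mod $v$) of weight $w$ with $\sum_tx_tx_{t+\delta}\le\lambda_a$ for all $X\in\mathcal C$, $0<\delta<v$, and $\sum_tx_ty_{t+\delta}\le\lambda_c$ for all distinct $X,Y\in\mathcal C$, $0\le\delta<v$. It is a-proper if $\lambda_a$ equals some auto-correlation value $\sum_tx_tx_{t+\delta}$ ($X\in\mathcal C$, $0<\delta<v$). *)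

theory Defs
  imports "HOL-Computational_Algebra.Primes"
begin

text \<open>A binary sequence of length v is modelled as a function nat => nat
  with values in {0,1} on indices 0..v-1 (indices read mod v) and value 0 outside.\<close>

definition binary_seq :: "nat \<Rightarrow> (nat \<Rightarrow> nat) \<Rightarrow> bool" where
  "binary_seq v x \<longleftrightarrow> (\<forall>t<v. x t \<in> {0, 1}) \<and> (\<forall>t\<ge>v. x t = 0)"

definition weight :: "nat \<Rightarrow> (nat \<Rightarrow> nat) \<Rightarrow> nat" where
  "weight v x = (\<Sum>t<v. x t)"

definition corr :: "nat \<Rightarrow> (nat \<Rightarrow> nat) \<Rightarrow> (nat \<Rightarrow> nat) \<Rightarrow> nat \<Rightarrow> nat" where
  "corr v x y \<delta> = (\<Sum>t<v. x t * y ((t + \<delta>) mod v))"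

definition is_OOC :: "nat \<Rightarrow> nat \<Rightarrow> nat \<Rightarrow> nat \<Rightarrow> (nat \<Rightarrow> nat) set \<Rightarrow> bool" where
  "is_OOC v w la lc C \<longleftrightarrow>
     (\<forall>X\<in>C. binary_seq v X \<and> weight v X = w) \<and>
     (\<forall>X\<in>C. \<forall>\<delta>. 0 < \<delta> \<and> \<delta> < v \<longrightarrow> corr v X X \<delta> \<le> la) \<and>
     (\<forall>X\<in>C. \<forall>Y\<in>C. X \<noteq> Y \<longrightarrow> (\<forall>\<delta><v. corr v X Y \<delta> \<le> lc))"

definition a_proper :: "nat \<Rightarrow> nat \<Rightarrow> (nat \<Rightarrow> nat) set \<Rightarrow> bool" where
  "a_proper v la C \<longleftrightarrow> (\<exists>X\<in>C. \<exists>\<delta>. 0 < \<delta> \<and> \<delta> < v \<and> corr v X X \<delta> = la)"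

definition ones :: "nat \<Rightarrow> (nat \<Rightarrow> nat) \<Rightarrow> nat set" where
  "ones v x = {t. t < v \<and> x t = 1}"

definition mult_shift :: "nat \<Rightarrow> nat \<Rightarrow> nat \<Rightarrow> (nat \<Rightarrow> nat) \<Rightarrow> (nat \<Rightarrow> nat)" where
  "mult_shift v r s x = (\<lambda>t. if t < v then x ((r * t + s) mod v) else 0)"

definition OOC_equiv :: "nat \<Rightarrow> (nat \<Rightarrow> nat) set \<Rightarrow> (nat \<Rightarrow> nat) set \<Rightarrow> bool" where
  "OOC_equiv v C C' \<longleftrightarrow>
     (\<exists>r'. r' < v \<and> coprime r' v \<and>
        (\<exists>\<sigma>. C' = (\<lambda>X. mult_shift v r' (\<sigma> X) X) ` C))"

end

theory Submission
  imports Defs "HOL-Number_Theory.Cong"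
begin


lemma coprime_lt:
  assumes "prime (v::nat)" "0 < r" "r < v" shows "coprime r v"
proof -
  have "\<not> v dvd r" using assms(2,3) by (meson dvd_imp_le not_le)
  then have "coprime v r" using assms(1) prime_imp_coprime by blast
  then show ?thesis by (simp add: coprime_commute)
qed

lemma inverse_ex:
  assumes "prime (v::nat)" "coprime d v"
  shows "\<exists>r. 0 < r \<and> r < v \<and> [d * r = 1] (mod v)"
proof -
  obtain x where x: "[d * x = Suc 0] (mod v)" using cong_solve_coprime_nat assms(2) by blast
  have v1: "v > 1" using assms(1) prime_gt_1_nat by blast
  have c: "[d * (x mod v) = 1] (mod v)" using x
    by (metis One_nat_def cong_def mod_mult_right_eq)
  have "x mod v \<noteq> 0"
  proof
    assume "x mod v = 0"
    with c have "[0 = 1] (mod v)" by simp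
    then show False using v1 by (simp add: cong_def)
  qed
  then show ?thesis using c v1 by (intro exI[of _ "x mod v"]) auto
qed

lemma affine_inj:
  fixes r v t t' s :: nat
  assumes "coprime r v" "t < v" "t' < v" "(r*t+s) mod v = (r*t'+s) mod v"
  shows "t = t'"
proof -
  have "[t*r + s = t'*r + s] (mod v)" using assms(4) by (simp add: cong_def mult.commute)
  then have "[t*r = t'*r] (mod v)" using cong_add_rcancel_nat by blast
  then have "[t = t'] (mod v)" using cong_mult_rcancel_nat assms(1) by (metis coprime_commute)
  then show ?thesis using assms(2,3) cong_less_imp_eq_nat by blast
qed

lemma affine_bij:
  fixes r v s :: nat
  assumes "coprime r v" "0 < v"
  shows "bij_betw (\<lambda>t. (r*t+s) mod v) {..<v} {..<v}"
proof -
  have inj: "inj_on (\<lambda>t. (r*t+s) mod v) {..<v}"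
  proof (rule inj_onI)
    fix t t' assume "t \<in> {..<v}" "t' \<in> {..<v}" "(r*t+s) mod v = (r*t'+s) mod v"
    then show "t = t'" using affine_inj[OF assms(1)] by blast
  qed
  have sub: "(\<lambda>t. (r*t+s) mod v) ` {..<v} \<subseteq> {..<v}" using assms(2) by auto
  have "card ((\<lambda>t. (r*t+s) mod v) ` {..<v}) = card {..<v::nat}" using card_image[OF inj] .
  then have "(\<lambda>t. (r*t+s) mod v) ` {..<v} = {..<v}" using sub card_subset_eq[OF finite_lessThan sub] by simp
  then show ?thesis using inj by (simp add: bij_betw_def)
qed

lemma sum_affine:
  fixes r v s :: nat
  assumes "coprime r v" "0 < v"
  shows "(\<Sum>t<v. F ((r*t+s) mod v)) = (\<Sum>u<v. (F u :: nat))"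
  using sum.reindex_bij_betw[OF affine_bij[OF assms, of s], of F] .

lemma corr_mod: "corr v X Y (d mod v) = corr v X Y d"
  unfolding corr_def by (simp add: mod_add_right_eq)

lemma corr_shift:
  fixes r v s1 s2 :: nat
  assumes "coprime r v" "0 < v" "s1 < v"
  shows "corr v (mult_shift v r s1 X) (mult_shift v r s2 Y) \<delta>
       = corr v X Y ((r*\<delta> + s2 + (v - s1)) mod v)"
proof -
  define D where "D = (r*\<delta> + s2 + (v - s1)) mod v"
  have idx: "(r*((t+\<delta>) mod v)+s2) mod v = ((r*t+s1) mod v + D) mod v" for t
  proof -
    have "(r*((t+\<delta>) mod v)+s2) mod v = (r*t+r*\<delta>+s2) mod v"
      by (metis distrib_left mod_add_left_eq mod_mult_right_eq)
    also have "\<dots> = (r*t+r*\<delta>+s2 + v) mod v" by simp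
    also have "r*t+r*\<delta>+s2 + v = r*t+s1 + (r*\<delta> + s2 + (v - s1))" using assms(3) by simp
    also have "(r*t+s1 + (r*\<delta> + s2 + (v - s1))) mod v = ((r*t+s1) mod v + D) mod v" unfolding D_def by (simp add: mod_add_eq)
    finally show ?thesis .
  qed
  have "corr v (mult_shift v r s1 X) (mult_shift v r s2 Y) \<delta>
      = (\<Sum>t<v. X ((r*t+s1) mod v) * Y (((r*t+s1) mod v + D) mod v))"
    unfolding corr_def mult_shift_def using assms(2) idx by (intro sum.cong) auto
  also have "\<dots> = (\<Sum>u<v. X u * Y ((u + D) mod v))"
    using sum_affine[OF assms(1,2), of "\<lambda>u. X u * Y ((u + D) mod v)"] by simp
  finally show ?thesis unfolding corr_def D_def .
qed

lemma weight_shift: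
  fixes r v s :: nat
  assumes "coprime r v" "0 < v"
  shows "weight v (mult_shift v r s X) = weight v X"
  unfolding weight_def mult_shift_def using sum_affine[OF assms, of X s] by simp

lemma binary_shift: "0 < v \<Longrightarrow> binary_seq v X \<Longrightarrow> binary_seq v (mult_shift v r s X)"
  unfolding binary_seq_def mult_shift_def by auto

lemma corr_card:
  assumes "binary_seq v X" "0 < v"
  shows "corr v X X d = card {t\<in>ones v X. (t+d) mod v \<in> ones v X}"
proof -
  have "corr v X X d = (\<Sum>t<v. of_bool (t \<in> ones v X \<and> (t+d) mod v \<in> ones v X))"
    unfolding corr_def
  proof (intro sum.cong refl)
    fix t assume t: "t \<in> {..<v}"
    have "X t \<in> {0,1}" "X ((t+d) mod v) \<in> {0,1}" using assms t unfolding binary_seq_def by auto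
    then show "X t * X ((t + d) mod v) = of_bool (t \<in> ones v X \<and> (t+d) mod v \<in> ones v X)"
      using t assms(2) unfolding ones_def by auto
  qed
  also have "\<dots> = card ({..<v} \<inter> {t. t \<in> ones v X \<and> (t+d) mod v \<in> ones v X})" by simp
  also have "{..<v} \<inter> {t. t \<in> ones v X \<and> (t+d) mod v \<in> ones v X} = {t\<in>ones v X. (t+d) mod v \<in> ones v X}"
    unfolding ones_def by auto
  finally show ?thesis .
qed

lemma weight_card:
  assumes "binary_seq v X"
  shows "weight v X = card (ones v X)"
proof -
  have "weight v X = (\<Sum>t<v. of_bool (t \<in> ones v X))"
    unfolding weight_def
  proof (intro sum.cong refl)
    fix t assume t: "t \<in> {..<v}"
    have "X t \<in> {0,1}" using assms t unfolding binary_seq_def by auto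
    then show "X t = of_bool (t \<in> ones v X)" using t unfolding ones_def by auto
  qed
  also have "\<dots> = card ({..<v} \<inter> {t. t \<in> ones v X})" by simp
  also have "{..<v} \<inter> {t. t \<in> ones v X} = ones v X" unfolding ones_def by auto
  finally show ?thesis .
qed

lemma down_closed:
  assumes "finite S" "\<forall>k\<in>S. \<forall>j\<le>k. j \<in> S" "card S = (w::nat)"
  shows "S = {..<w}"
proof -
  have "S \<subseteq> {..<w}"
  proof
    fix k assume "k \<in> S"
    then have "{..k} \<subseteq> S" using assms(2) by auto
    then have "card {..k} \<le> card S" using assms(1) card_mono by blast
    then show "k \<in> {..<w}" using assms(3) by simp
  qed
  then show ?thesis using assms by (simp add: card_subset_eq)
qed



lemma ap_lemma:
  fixes v w d p0 :: nat and Q :: "nat set"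
  assumes pv: "prime v" and Qs: "Q \<subseteq> {..<v}" and cQ: "card Q = w" and wv: "w < v"
    and d0: "0 < d" and dv: "d < v" and p0: "p0 \<in> Q"
    and succ: "\<forall>p\<in>Q. p \<noteq> p0 \<longrightarrow> (p+d) mod v \<in> Q"
  shows "\<exists>r s. r < v \<and> coprime r v \<and> s < v \<and> (\<lambda>q. (r*q+s) mod v) ` Q = {0..<w}"
proof -
  have v0: "0 < v" using dv by simp
  have cd: "coprime d v" using coprime_lt[OF pv d0 dv] .
  have fQ: "finite Q" using Qs finite_subset by blast
  have F2: "(p+j*d) mod v \<in> Q" if "p \<in> Q" "\<forall>i<j. (p+i*d) mod v \<noteq> p0" for p j
    using that(2)
  proof (induction j)
    case 0 then show ?case using that(1) Qs by auto
  next
    case (Suc j)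
    have inQ: "(p+j*d) mod v \<in> Q" using Suc by auto
    have ne: "(p+j*d) mod v \<noteq> p0" using Suc.prems by auto
    have "(p+Suc j*d) mod v = ((p+j*d) + d) mod v" by (simp add: algebra_simps)
    also have "\<dots> = ((p+j*d) mod v + d) mod v" by (simp add: mod_add_left_eq)
    finally have e: "(p+Suc j*d) mod v = ((p+j*d) mod v + d) mod v" .
    show ?case unfolding e using succ inQ ne by blast
  qed
  have F3: "i = j" if "i < v" "j < v" "(p+i*d) mod v = (p+j*d) mod v" for p i j
  proof -
    have "(d*i+p) mod v = (d*j+p) mod v" using that(3) by (simp add: algebra_simps)
    then show ?thesis using affine_inj[OF cd that(1,2)] by blast
  qed
  have ex: "\<exists>k<v. (p+k*d) mod v = p0" if pQ: "p \<in> Q" for p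
  proof (rule ccontr)
    assume "\<not> ?thesis"
    then have all: "\<forall>j<v. (p+j*d) mod v \<in> Q" using F2[OF pQ] by (meson less_trans)
    have "inj_on (\<lambda>j. (p+j*d) mod v) {..<v}"
    proof (rule inj_onI)
      fix i j assume "i \<in> {..<v}" "j \<in> {..<v}" "(p+i*d) mod v = (p+j*d) mod v"
      then show "i = j" using F3 by blast
    qed
    then have "card ((\<lambda>j. (p+j*d) mod v) ` {..<v}) = v" by (simp add: card_image)
    moreover have "(\<lambda>j. (p+j*d) mod v) ` {..<v} \<subseteq> Q" using all by auto
    ultimately have "v \<le> card Q" using fQ card_mono by metis
    then show False using cQ wv by simp
  qed
  define h where "h p = (LEAST k. (p+k*d) mod v = p0)" for p
  have h1: "(p + h p * d) mod v = p0" if pQ: "p \<in> Q" for p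
  proof -
    obtain k where "(p+k*d) mod v = p0" using ex[OF pQ] by blast
    then show ?thesis unfolding h_def by (rule LeastI)
  qed
  have h2: "h p < v" if pQ: "p \<in> Q" for p
  proof -
    obtain k where "k < v" "(p+k*d) mod v = p0" using ex[OF pQ] by blast
    then have "(LEAST k. (p+k*d) mod v = p0) \<le> k" by (intro Least_le) 
    then show ?thesis unfolding h_def using \<open>k < v\<close> by linarith
  qed
  have h3: "(p + i * d) mod v \<noteq> p0" if "p \<in> Q" "i < h p" for p i
    using that(2) unfolding h_def using not_less_Least by blast
  have hinj: "inj_on h Q"
  proof (rule inj_onI)
    fix p p' assume a: "p \<in> Q" "p' \<in> Q" "h p = h p'"
    have "[p + h p * d = p' + h p * d] (mod v)" using h1[OF a(1)] h1[OF a(2)] a(3) by (simp add: cong_def)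
    then have "[p = p'] (mod v)" using cong_add_rcancel_nat by blast
    then show "p = p'" using a Qs cong_less_imp_eq_nat by blast
  qed
  have down: "\<forall>k\<in>h ` Q. \<forall>j\<le>k. j \<in> h ` Q"
  proof (intro ballI allI impI)
    fix k j assume k: "k \<in> h ` Q" and jk: "j \<le> k"
    then obtain p where pQ: "p \<in> Q" and kp: "k = h p" by blast
    define p' where "p' = (p + (k - j)*d) mod v"
    have p'Q: "p' \<in> Q" unfolding p'_def using F2[OF pQ] h3[OF pQ] kp by auto
    have shift: "(p' + i*d) mod v = (p + (k - j + i)*d) mod v" for i
    proof -
      have "p + (k - j + i)*d = (p + (k-j)*d) + i*d" by (simp add: add_mult_distrib)
      then show ?thesis unfolding p'_def by (metis mod_add_left_eq)
    qed
    have "h p' = j" unfolding h_def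
    proof (rule Least_equality)
      show "(p' + j * d) mod v = p0" using shift[of j] jk h1[OF pQ] kp by simp
    next
      fix i assume "(p' + i * d) mod v = p0"
      then have "(p + (k - j + i)*d) mod v = p0" using shift by simp
      then have "\<not> (k - j + i < h p)" using h3[OF pQ] by blast
      then show "j \<le> i" using kp jk by simp
    qed
    then show "j \<in> h ` Q" using p'Q by blast
  qed
  have hQ: "h ` Q = {..<w}"
    using down_closed[OF finite_imageI[OF fQ] down] card_image[OF hinj] cQ by simp
  obtain r where r0: "0 < r" and rv: "r < v" and rd: "[d * r = 1] (mod v)"
    using inverse_ex[OF pv cd] by blast
  define r' where "r' = v - r"
  define s where "s = (r * p0) mod v"
  have key: "(r'*q + s) mod v = h q" if qQ: "q \<in> Q" for q
  proof -
    have "[r'*q + s = r'*q + r*p0] (mod v)" unfolding s_def by (simp add: cong_def mod_add_right_eq)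
    moreover have "[r*p0 = r*(q + h q * d)] (mod v)" using h1[OF qQ]
      by (metis cong_mod_left cong_refl cong_scalar_left cong_sym)
    ultimately have c1: "[r'*q + s = r'*q + r*(q + h q * d)] (mod v)"
      by (meson cong_add_lcancel_nat cong_trans)
    have vq: "(v - r)*q + r*q = v*q" using rv
      by (metis add_mult_distrib le_add_diff_inverse2 less_imp_le)
    have "r'*q + r*(q + h q * d) = ((v - r)*q + r*q) + h q * (d*r)" unfolding r'_def
      by (simp add: algebra_simps)
    then have e: "r'*q + r*(q + h q * d) = v*q + h q * (d*r)" using vq by simp
    have E: "[v*q + h q * (d*r) = 0 + h q * 1] (mod v)"
      using rd by (intro cong_add cong_scalar_left) (simp_all add: cong_def)
    have "[r'*q + s = v*q + h q * (d*r)] (mod v)" using c1 unfolding e .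
    then have "[r'*q + s = 0 + h q * 1] (mod v)" using E by (rule cong_trans)
    then have "[r'*q + s = h q] (mod v)" by simp
    then show ?thesis using h2[OF qQ] by (simp add: cong_def)
  qed
  have "(\<lambda>q. (r'*q+s) mod v) ` Q = h ` Q" using key by (rule image_cong[OF refl])
  then have img: "(\<lambda>q. (r'*q+s) mod v) ` Q = {0..<w}" using hQ by (simp add: atLeast0LessThan)
  have "r' < v" "0 < r'" using r0 rv unfolding r'_def by auto
  moreover have "coprime r' v" using coprime_lt[OF pv] calculation by blast
  moreover have "s < v" unfolding s_def using v0 by simp
  ultimately show ?thesis using img by (intro exI[of _ r'] exI[of _ s]) simp
qed



lemma inv_affine:
  fixes v r s :: nat
  assumes pv: "prime v" and rv: "r < v" and cr: "coprime r v" and sv: "s < v"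
  shows "\<exists>r2 s2. r2 < v \<and> coprime r2 v \<and> s2 < v \<and> (\<forall>t<v. (r*((r2*t+s2) mod v)+s) mod v = t)"
proof -
  obtain r2 where r20: "0 < r2" and r2v: "r2 < v" and rr: "[r * r2 = 1] (mod v)"
    using inverse_ex[OF pv cr] by blast
  define s2 where "s2 = (r2*(v - s)) mod v"
  have v0: "0 < v" using rv by simp
  have "\<forall>t<v. (r*((r2*t+s2) mod v)+s) mod v = t"
  proof (intro allI impI)
    fix t assume tv: "t < v"
    have "(r*((r2*t+s2) mod v)+s) mod v = (r*(r2*t+r2*(v-s))+s) mod v"
      unfolding s2_def by (metis mod_add_left_eq mod_add_right_eq mod_mult_right_eq)
    also have "r*(r2*t+r2*(v-s))+s = (r*r2)*(t+(v-s)) + s" by (simp add: algebra_simps)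
    finally have e: "(r*((r2*t+s2) mod v)+s) mod v = ((r*r2)*(t+(v-s)) + s) mod v" .
    have "[(r*r2)*(t+(v-s)) + s = 1*(t+(v-s)) + s] (mod v)"
      using rr by (intro cong_add cong_mult) simp_all
    moreover have "1*(t+(v-s)) + s = t + v" using sv by simp
    ultimately have "[(r*r2)*(t+(v-s)) + s = t + v] (mod v)" by simp
    then have "((r*r2)*(t+(v-s)) + s) mod v = t" using tv by (simp add: cong_def)
    then show "(r*((r2*t+s2) mod v)+s) mod v = t" using e by simp
  qed
  moreover have "coprime r2 v" using coprime_lt[OF pv r20 r2v] .
  moreover have "s2 < v" unfolding s2_def using v0 by simp
  ultimately show ?thesis using r2v by blast
qed



theorem corollary5p5:
  fixes v w lc :: nat and C :: "(nat \<Rightarrow> nat) set"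
  assumes "prime v"
    and "is_OOC v w (w - 1) lc C"
    and "a_proper v (w - 1) C"
  shows "(\<exists>X\<in>C. \<exists>r s. r < v \<and> coprime r v \<and> s < v \<and>
            (\<lambda>q. (r * q + s) mod v) ` ones v X = {0..<w})
       \<and> (\<exists>C'. is_OOC v w (w - 1) lc C' \<and> OOC_equiv v C C' \<and>
            (\<exists>Y\<in>C'. \<forall>t<v. Y t = (if t < w then 1 else 0)))"
proof -
  note pv = assms(1)
  have v1: "1 < v" using pv prime_gt_1_nat by blast
  then have v0: "0 < v" by simp
  have OOC1: "\<forall>X\<in>C. binary_seq v X \<and> weight v X = w" using assms(2) unfolding is_OOC_def by blast
  have OOC2: "\<forall>X\<in>C. \<forall>\<delta>. 0 < \<delta> \<and> \<delta> < v \<longrightarrow> corr v X X \<delta> \<le> w - 1"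
    using assms(2) unfolding is_OOC_def by blast
  have OOC3: "\<forall>X\<in>C. \<forall>Y\<in>C. X \<noteq> Y \<longrightarrow> (\<forall>\<delta><v. corr v X Y \<delta> \<le> lc)"
    using assms(2) unfolding is_OOC_def by blast
  obtain X0 \<delta> where X0C: "X0 \<in> C" and d0: "0 < \<delta>" and dv: "\<delta> < v"
    and cX0: "corr v X0 X0 \<delta> = w - 1"
    using assms(3) unfolding a_proper_def by blast
  have bX0: "binary_seq v X0" and wX0: "weight v X0 = w" using OOC1 X0C by auto
  define Q where "Q = ones v X0"
  have Qs: "Q \<subseteq> {..<v}" unfolding Q_def ones_def by auto
  have fQ: "finite Q" using Qs finite_subset by blast
  have cQ: "card Q = w" using weight_card[OF bX0] wX0 unfolding Q_def by simp
  have P1: "\<exists>r s. r < v \<and> coprime r v \<and> s < v \<and> (\<lambda>q. (r * q + s) mod v) ` Q = {0..<w}"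
  proof (cases "w = 0")
    case True
    then have "Q = {}" using cQ fQ by simp
    then show ?thesis using True v1 by (intro exI[of _ 1] exI[of _ 0]) simp
  next
    case False
    define A where "A = {t\<in>Q. (t+\<delta>) mod v \<in> Q}"
    have cA: "card A = w - 1" using corr_card[OF bX0 v0, of \<delta>] cX0 unfolding A_def Q_def by simp
    have AQ: "A \<subseteq> Q" unfolding A_def by auto
    have "card (Q - A) = 1" using card_Diff_subset[OF finite_subset[OF AQ fQ] AQ] cA cQ False by simp
    then obtain p0 where QA: "Q - A = {p0}" using card_1_singletonE by blast
    have wv: "w < v"
    proof (rule ccontr)
      assume "\<not> w < v"
      moreover have "w \<le> v" using card_mono[OF finite_lessThan Qs] cQ by simp
      ultimately have "card Q = card {..<v}" using cQ by simp
      then have "Q = {..<v}" using card_subset_eq[OF finite_lessThan Qs] by simp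
      then have "A = Q" unfolding A_def using v0 by auto
      then show False using cA cQ False by simp
    qed
    have p0Q: "p0 \<in> Q" using QA by blast
    have succ: "\<forall>p\<in>Q. p \<noteq> p0 \<longrightarrow> (p+\<delta>) mod v \<in> Q"
    proof (intro ballI impI)
      fix p assume "p \<in> Q" "p \<noteq> p0"
      then have "p \<in> A" using QA by blast
      then show "(p+\<delta>) mod v \<in> Q" unfolding A_def by blast
    qed
    show ?thesis using ap_lemma[OF pv Qs cQ wv d0 dv p0Q succ] .
  qed
  then obtain r s where rv: "r < v" and cr: "coprime r v" and sv: "s < v"
    and img: "(\<lambda>q. (r * q + s) mod v) ` Q = {0..<w}" by blast
  obtain r2 s2 where r2v: "r2 < v" and cr2: "coprime r2 v" and s2v: "s2 < v"
    and inv: "\<forall>t<v. (r*((r2*t+s2) mod v)+s) mod v = t"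
    using inv_affine[OF pv rv cr sv] by blast
  define \<sigma> :: "(nat \<Rightarrow> nat) \<Rightarrow> nat" where "\<sigma> X = (if X = X0 then s2 else 0)" for X
  have \<sigma>v: "\<sigma> X < v" for X unfolding \<sigma>_def using s2v v0 by simp
  define C' where "C' = (\<lambda>X. mult_shift v r2 (\<sigma> X) X) ` C"
  have D0: "(r2*\<delta>' + \<sigma> X + (v - \<sigma> X)) mod v \<noteq> 0" if "0 < \<delta>'" "\<delta>' < v" for \<delta>' X
  proof
    assume "(r2*\<delta>' + \<sigma> X + (v - \<sigma> X)) mod v = 0"
    moreover have "r2*\<delta>' + \<sigma> X + (v - \<sigma> X) = r2*\<delta>' + v" using \<sigma>v[of X] by simp
    ultimately have "(r2*\<delta>' + 0) mod v = (r2*0 + 0) mod v" by simp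
    then have "\<delta>' = 0" using affine_inj[OF cr2 that(2) v0] by blast
    then show False using that by simp
  qed
  have c1: "\<forall>Y\<in>C'. binary_seq v Y \<and> weight v Y = w"
  proof
    fix Y assume "Y \<in> C'"
    then obtain X where XC: "X \<in> C" and Y: "Y = mult_shift v r2 (\<sigma> X) X" unfolding C'_def by blast
    show "binary_seq v Y \<and> weight v Y = w"
      using Y binary_shift[OF v0] weight_shift[OF cr2 v0] OOC1 XC by simp
  qed
  have c2: "\<forall>Y\<in>C'. \<forall>\<delta>'. 0 < \<delta>' \<and> \<delta>' < v \<longrightarrow> corr v Y Y \<delta>' \<le> w - 1"
  proof (intro ballI allI impI)
    fix Y \<delta>' assume "Y \<in> C'" and d': "0 < \<delta>' \<and> \<delta>' < v"
    then obtain X where XC: "X \<in> C" and Y: "Y = mult_shift v r2 (\<sigma> X) X" unfolding C'_def by blast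
    have "corr v Y Y \<delta>' = corr v X X ((r2*\<delta>' + \<sigma> X + (v - \<sigma> X)) mod v)"
      unfolding Y by (rule corr_shift[OF cr2 v0 \<sigma>v])
    moreover have "0 < (r2*\<delta>' + \<sigma> X + (v - \<sigma> X)) mod v" using D0 d' by blast
    moreover have "(r2*\<delta>' + \<sigma> X + (v - \<sigma> X)) mod v < v" using v0 by simp
    ultimately show "corr v Y Y \<delta>' \<le> w - 1" using OOC2 XC by simp
  qed
  have c3: "\<forall>Y1\<in>C'. \<forall>Y2\<in>C'. Y1 \<noteq> Y2 \<longrightarrow> (\<forall>\<delta>'<v. corr v Y1 Y2 \<delta>' \<le> lc)"
  proof (intro ballI allI impI)
    fix Y1 Y2 \<delta>' assume "Y1 \<in> C'" "Y2 \<in> C'" "Y1 \<noteq> Y2" "\<delta>' < v"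
    then obtain X1 X2 where X1C: "X1 \<in> C" and Y1: "Y1 = mult_shift v r2 (\<sigma> X1) X1"
      and X2C: "X2 \<in> C" and Y2: "Y2 = mult_shift v r2 (\<sigma> X2) X2" unfolding C'_def by blast
    have ne: "X1 \<noteq> X2" using \<open>Y1 \<noteq> Y2\<close> Y1 Y2 by blast
    have "corr v Y1 Y2 \<delta>' = corr v X1 X2 ((r2*\<delta>' + \<sigma> X2 + (v - \<sigma> X1)) mod v)"
      unfolding Y1 Y2 by (rule corr_shift[OF cr2 v0 \<sigma>v])
    moreover have "(r2*\<delta>' + \<sigma> X2 + (v - \<sigma> X1)) mod v < v" using v0 by simp
    ultimately show "corr v Y1 Y2 \<delta>' \<le> lc" using OOC3 X1C X2C ne \<open>\<delta>' < v\<close> by simp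
  qed
  have isC': "is_OOC v w (w - 1) lc C'" unfolding is_OOC_def using c1 c2 c3 by blast
  have eq: "OOC_equiv v C C'" unfolding OOC_equiv_def C'_def using r2v cr2 by blast
  define Y where "Y = mult_shift v r2 s2 X0"
  have YC': "Y \<in> C'" unfolding C'_def Y_def using X0C \<sigma>_def by force
  have Yt: "\<forall>t<v. Y t = (if t < w then 1 else 0)"
  proof (intro allI impI)
    fix t assume tv: "t < v"
    define u where "u = (r2*t+s2) mod v"
    have uv: "u < v" unfolding u_def using v0 by simp
    have Yu: "Y t = X0 u" unfolding Y_def mult_shift_def u_def using tv by simp
    have phi: "(r*u+s) mod v = t" unfolding u_def using inv tv by blast
    show "Y t = (if t < w then 1 else 0)"
    proof (cases "t < w")
      case True
      then have "t \<in> (\<lambda>q. (r * q + s) mod v) ` Q" using img by simp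
      then obtain q where qQ: "q \<in> Q" and tq: "t = (r*q+s) mod v" by blast
      have qv: "q < v" using qQ Qs by auto
      have "(r*q+s) mod v = (r*u+s) mod v" using tq phi by simp
      then have "q = u" by (rule affine_inj[OF cr qv uv])
      then show ?thesis using qQ Yu True unfolding Q_def ones_def by simp
    next
      case False
      have "u \<notin> Q"
      proof
        assume "u \<in> Q"
        then have "t \<in> {0..<w}" using img phi by blast
        then show False using False by simp
      qed
      moreover have "X0 u \<in> {0,1}" using bX0 uv unfolding binary_seq_def by blast
      ultimately show ?thesis using Yu False uv unfolding Q_def ones_def by auto
    qed
  qed
  have part1: "\<exists>X\<in>C. \<exists>r s. r < v \<and> coprime r v \<and> s < v \<and>
            (\<lambda>q. (r * q + s) mod v) ` ones v X = {0..<w}"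
    using X0C P1 unfolding Q_def by blast
  have part2: "\<exists>C'. is_OOC v w (w - 1) lc C' \<and> OOC_equiv v C C' \<and>
            (\<exists>Y\<in>C'. \<forall>t<v. Y t = (if t < w then 1 else 0))"
    using isC' eq YC' Yt by blast
  show ?thesis using part1 part2 by blast
qed

end
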